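(* For all $j_1,j_2\in\tfrac12\mathbb{N}^+$: (i) $\widehat R^{(j_1+\frac12,j_2)}=\mathcal{F}^{(j_1+\frac12)}_{12}\widehat R^{(\frac12,j_2)}_{13}\widehat R^{(j_1,j_2)}_{23}\mathcal{E}^{(j_1+\frac12)}_{12}$; (ii) $\widehat R^{(j_1+\frac12,j_2)}=\mathcal{F}^{(j_1+\frac12)}_{12}\widehat R^{(j_1,j_2)}_{23}\widehat R^{(\frac12,j_2)}_{13}\mathcal{E}^{(j_1+\frac12)}_{12}$; where in (i),(ii) the three tensor factors have sizes $2,\,2j_1+1,\,2j_2+1$; (iii) $\widehat R^{(j_1,j_2+\frac12)}=\mathcal{F}^{(j_2+\frac12)}_{23}\widehat R^{(j_1,\frac12)}_{12}\widehat R^{(j_1,j_2)}_{13}\mathcal{E}^{(j_2+\frac12)}_{23}$; (iv) $\widehat R^{(j_1,j_2+\frac12)}=\mathcal{F}^{(j_2+\frac12)}_{23}\widehat R^{(j_1,j_2)}_{13}\widehat R^{(j_1,\frac12)}_{12}\mathcal{E}^{(j_2+\frac12)}_{23}$; where in (iii),(iv) the three tensor factors have sizes $2j_1+1,\,2,\,2j_2+1$.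
   Context: $\mathbb{F}$ is a field of characteristic zero in which every element has a square root; $q\in\mathbb{F}$ is nonzero and not a root of unity, with a fixed square root $q^{1/2}$ ($q^{k/2}:=(q^{1/2})^k$); other $(\cdot)^{1/2}$ are fixed square roots in $\mathbb{F}$. $[n]_q=\frac{q^n-q^{-n}}{q-q^{-1}}$. $\tfrac12\mathbb{N}^+=\{\tfrac12,1,\tfrac32,\dots\}$. $\otimes$ is the Kronecker product, $I_n$ the identity. Leg notation: for factors $\mathbb{F}^{n_1}\otimes\mathbb{F}^{n_2}\otimes\mathbb{F}^{n_3}$, $X_{12}=X\otimes I_{n_3}$, $X_{23}=I_{n_1}\otimes X$, $X_{13}=P(X\otimes I_{n_2})P$ with $P$ the flip of factors 2,3; for non-square $Y$, $Y_{12}=Y\otimes I_{n_3}$, $Y_{23}=I_{n_1}\otimes Y$. For $j\in\tfrac12\mathbb{N}^+$, $\mathcal{E}^{(j+\frac12)}$ is the $(4j+2)\times(2j+2)$ matrix with only nonzero entries $\mathcal{E}_{(a,a)}=\big(\frac{[2j+2-a]_q}{[2j+1]_q}\big)^{1/2}$, $\mathcal{E}_{(a+2j+1,a+1)}=\big(\frac{[a]_q}{[2j+1]_q}\big)^{1/2}$ ($1\le a\le 2j+1$), and $\mathcal{F}^{(j+\frac12)}$ is the $(2j+2)\times(4j+2)$ matrix with only nonzero entries $\mathcal{F}_{(a,a)}=\frac{([2j+2-a]_q[2j+1]_q)^{1/2}}{[2j+2-a]_q+[a-1]_q}$, $\mathcal{F}_{(a+1,a+2j+1)}=\frac{([a]_q[2j+1]_q)^{1/2}}{[2j+1-a]_q+[a]_q}$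 ($1\le a\le 2j+1$); the $4j+2$ side is $\mathbb{F}^2\otimes\mathbb{F}^{2j+1}$. For $j_1,j_2\in\tfrac12\mathbb{N}^+$, $\widehat R^{(j_1,j_2)}=q^{2\,\mathrm{diag}(j_1,j_1-1,\dots,-j_1)\otimes\mathrm{diag}(j_2,j_2-1,\dots,-j_2)}$, the $(2j_1+1)(2j_2+1)$-square diagonal matrix with entries $q^{2\alpha\beta}$. *)

theory Defs
  imports "Jordan_Normal_Form.Matrix"
begin

definition kron :: "'a::semiring_1 mat \<Rightarrow> 'a mat \<Rightarrow> 'a mat" where
  "kron A B = mat (dim_row A * dim_row B) (dim_col A * dim_col B)
     (\<lambda>(i, j). A $$ (i div dim_row B, j div dim_col B) * B $$ (i mod dim_row B, j mod dim_col B))"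

text \<open>Flip of tensor factors 2 and 3: the permutation matrix from
  F^{n1} (x) F^{n2} (x) F^{n3} to F^{n1} (x) F^{n3} (x) F^{n2}, sending
  e_i (x) e_j (x) e_k to e_i (x) e_k (x) e_j.\<close>
definition flip23 :: "nat \<Rightarrow> nat \<Rightarrow> nat \<Rightarrow> 'a::semiring_1 mat" where
  "flip23 n1 n2 n3 = mat (n1 * n3 * n2) (n1 * n2 * n3)
     (\<lambda>(r, c). let i = c div (n2 * n3); j = (c div n3) mod n2; k = c mod n3
              in if r = i * (n3 * n2) + k * n2 + j then 1 else 0)"

definition leg12 :: "nat \<Rightarrow> 'a::semiring_1 mat \<Rightarrow> 'a mat" where
  "leg12 n3 X = kron X (1\<^sub>m n3)"

definition leg23 :: "nat \<Rightarrow> 'a::semiring_1 mat \<Rightarrow> 'a mat" where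
  "leg23 n1 X = kron (1\<^sub>m n1) X"

definition leg13 :: "nat \<Rightarrow> nat \<Rightarrow> nat \<Rightarrow> 'a::semiring_1 mat \<Rightarrow> 'a mat" where
  "leg13 n1 n2 n3 X = flip23 n1 n3 n2 * kron X (1\<^sub>m n2) * flip23 n1 n2 n3"

definition qnum :: "'a::field \<Rightarrow> int \<Rightarrow> 'a" where
  "qnum q n = (q powi n - q powi (- n)) / (q - inverse q)"

text \<open>Spins are encoded as nat: the spin j in 1/2 N^+ is represented by n = 2j \<ge> 1.
  rhalf is the fixed square root q^(1/2); R-hat^(j1,j2) is diagonal of size
  (2j1+1)(2j2+1) with entry q^(2 alpha beta) = (q^(1/2))^(4 alpha beta) at the index
  of (alpha, beta) = (j1 - i, j2 - k), i.e. exponent (n1 - 2i)(n2 - 2k).\<close>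
definition Rhat :: "'a::field \<Rightarrow> nat \<Rightarrow> nat \<Rightarrow> 'a mat" where
  "Rhat rhalf n1 n2 = mat ((n1 + 1) * (n2 + 1)) ((n1 + 1) * (n2 + 1))
     (\<lambda>(r, c). if r = c then rhalf powi ((int n1 - 2 * int (r div (n2 + 1))) *
                                         (int n2 - 2 * int (r mod (n2 + 1))))
              else 0)"

text \<open>E^(j+1/2) for j = n/2, 0-based indices, size (2n+2) x (n+2).
  sq is the fixed square-root choice; (x/y)^(1/2) is read as sq x / sq y.\<close>
definition Emat :: "'a::field \<Rightarrow> ('a \<Rightarrow> 'a) \<Rightarrow> nat \<Rightarrow> 'a mat" where
  "Emat q sq n = mat (2 * n + 2) (n + 2)
     (\<lambda>(r, c). if r \<le> n \<and> c = r then sq (qnum q (int n + 1 - int r)) / sq (qnum q (int n + 1))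
              else if n + 1 \<le> r \<and> c = r - n then sq (qnum q (int r - int n)) / sq (qnum q (int n + 1))
              else 0)"

text \<open>F^(j+1/2) for j = n/2, 0-based indices, size (n+2) x (2n+2).
  ([x][y])^(1/2) is read as sq [x] * sq [y].\<close>
definition Fmat :: "'a::field \<Rightarrow> ('a \<Rightarrow> 'a) \<Rightarrow> nat \<Rightarrow> 'a mat" where
  "Fmat q sq n = mat (n + 2) (2 * n + 2)
     (\<lambda>(r, c). if c \<le> n \<and> r = c then
                 sq (qnum q (int n + 1 - int c)) * sq (qnum q (int n + 1))
                 / (qnum q (int n + 1 - int c) + qnum q (int c))
              else if n + 1 \<le> c \<and> r = c - n then
                 sq (qnum q (int c - int n)) * sq (qnum q (int n + 1))
                 / (qnum q (2 * int n + 1 - int c) + qnum q (int c - int n))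
              else 0)"

end

theory Submission
  imports Defs
begin

definition dmat :: "nat \<Rightarrow> (nat \<Rightarrow> 'a::semiring_1) \<Rightarrow> 'a mat" where
  "dmat n f = mat n n (\<lambda>(r,c). if r = c then f r else 0)"

lemma dmat_dims[simp]: "dim_row (dmat n f) = n" "dim_col (dmat n f) = n"
  "dmat n f \<in> carrier_mat n n"
  by (auto simp: dmat_def)

lemma dmat_index[simp]: "r < n \<Longrightarrow> c < n \<Longrightarrow> dmat n f $$ (r,c) = (if r = c then f r else 0)"
  by (simp add: dmat_def)

lemma sum_single:
  assumes "finite S" "a \<in> S" "\<And>x. x \<in> S \<Longrightarrow> x \<noteq> a \<Longrightarrow> f x = 0"
  shows "sum f S = f a"
proof -
  have "sum f S = sum f {a}"
    by (rule sum.mono_neutral_left[symmetric]) (use assms in auto)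
  thus ?thesis by simp
qed

lemma sum_split_mult:
  "(\<Sum>s\<in>{0..<m*p}. f s) = (\<Sum>a<m. \<Sum>k<p. f (a*p+k::nat))"
proof (induction m)
  case 0 then show ?case by simp
next
  case (Suc m)
  have "{0..<Suc m * p} = {0..<m*p} \<union> {m*p..<m*p+p}" by auto
  hence "(\<Sum>s\<in>{0..<Suc m*p}. f s) = (\<Sum>s\<in>{0..<m*p}. f s) + (\<Sum>s\<in>{m*p..<m*p+p}. f s)"
    by (simp add: sum.union_disjoint ivl_disj_int)
  also have "(\<Sum>s\<in>{m*p..<m*p+p}. f s) = (\<Sum>k<p. f (m*p+k))"
  proof -
    have "(\<Sum>s\<in>{0+m*p..<p+m*p}. f s) = (\<Sum>k\<in>{0..<p}. f (k+m*p))"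
      by (rule sum.shift_bounds_nat_ivl)
    thus ?thesis by (simp add: add.commute lessThan_atLeast0)
  qed
  finally show ?case using Suc by simp
qed

lemma dmat_mult: "dmat n f * dmat n g = dmat n (\<lambda>i. f i * g i)"
proof (rule eq_matI)
  fix i j assume ij: "i < dim_row (dmat n (\<lambda>i. f i * g i))" "j < dim_col (dmat n (\<lambda>i. f i * g i))"
  hence "(dmat n f * dmat n g) $$ (i,j) = (\<Sum>k\<in>{0..<n}. dmat n f $$ (i,k) * dmat n g $$ (k,j))"
    by (simp add: scalar_prod_def)
  also have "\<dots> = dmat n f $$ (i,i) * dmat n g $$ (i,j)"
    by (rule sum_single) (use ij in auto)
  finally show "(dmat n f * dmat n g) $$ (i,j) = dmat n (\<lambda>i. f i * g i) $$ (i,j)" using ij by simp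
qed auto

lemma kron_dims[simp]: "dim_row (kron A B) = dim_row A * dim_row B" "dim_col (kron A B) = dim_col A * dim_col B"
  by (auto simp: kron_def)

lemma kron_index[simp]: "i < dim_row A * dim_row B \<Longrightarrow> j < dim_col A * dim_col B \<Longrightarrow>
  kron A B $$ (i,j) = A $$ (i div dim_row B, j div dim_col B) * B $$ (i mod dim_row B, j mod dim_col B)"
  by (simp add: kron_def)

lemma divmod_eq: "(p::nat) > 0 \<Longrightarrow> (i = j) = (i div p = j div p \<and> i mod p = j mod p)"
  by (metis div_mult_mod_eq)

lemma kron_dmat_one: assumes p: "p > 0"
  shows "kron (dmat m f) (1\<^sub>m p) = dmat (m*p) (\<lambda>s. f (s div p))"
proof (rule eq_matI)
  fix i j assume ij: "i < dim_row (dmat (m*p) (\<lambda>s. f (s div p)))" "j < dim_col (dmat (m*p) (\<lambda>s. f (s div p)))"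
  hence "i div p < m" "j div p < m" "i mod p < p" "j mod p < p" using p
    by (auto simp: less_mult_imp_div_less)
  thus "kron (dmat m f) (1\<^sub>m p) $$ (i,j) = dmat (m*p) (\<lambda>s. f (s div p)) $$ (i,j)"
    using ij divmod_eq[OF p, of i j] by auto
qed auto

lemma kron_one_dmat: assumes m: "m > 0"
  shows "kron (1\<^sub>m p) (dmat m f) = dmat (p*m) (\<lambda>s. f (s mod m))"
proof (rule eq_matI)
  fix i j assume ij: "i < dim_row (dmat (p*m) (\<lambda>s. f (s mod m)))" "j < dim_col (dmat (p*m) (\<lambda>s. f (s mod m)))"
  hence "i div m < p" "j div m < p" "i mod m < m" "j mod m < m" using m
    by (auto simp: less_mult_imp_div_less mult.commute)
  thus "kron (1\<^sub>m p) (dmat m f) $$ (i,j) = dmat (p*m) (\<lambda>s. f (s mod m)) $$ (i,j)"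
    using ij divmod_eq[OF m, of i j] by auto
qed auto

definition sig :: "nat \<Rightarrow> nat \<Rightarrow> nat \<Rightarrow> nat" where
  "sig n2 n3 c = (c div (n2*n3))*(n3*n2) + (c mod n3)*n2 + (c div n3) mod n2"

lemma flip23_dims[simp]: "dim_row (flip23 n1 n2 n3) = n1*n3*n2" "dim_col (flip23 n1 n2 n3) = n1*n2*n3"
  by (auto simp: flip23_def)

lemma flip23_index[simp]: "r < n1*n3*n2 \<Longrightarrow> c < n1*n2*n3 \<Longrightarrow>
   flip23 n1 n2 n3 $$ (r,c) = (if r = sig n2 n3 c then 1 else 0)"
  by (simp add: flip23_def sig_def Let_def)

lemma sig_parts:
  fixes i j k n2 n3 :: nat
  assumes "j < n2" "k < n3"
  shows "sig n2 n3 (i*(n2*n3) + j*n3 + k) = i*(n3*n2) + k*n2 + j"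
proof -
  have a: "j*n3 + k < n2*n3"
  proof -
    have "j*n3 + k < j*n3 + n3" using assms by simp
    also have "\<dots> = (j+1)*n3" by simp
    also have "\<dots> \<le> n2*n3" using assms by (intro mult_right_mono) auto
    finally show ?thesis .
  qed
  have nz: "n2*n3 \<noteq> 0" using assms by simp
  have d1: "(i*(n2*n3) + j*n3 + k) div (n2*n3) = i"
  proof -
    have "(i*(n2*n3) + j*n3 + k) = (j*n3+k) + i*(n2*n3)" by simp
    also have "\<dots> div (n2*n3) = (j*n3+k) div (n2*n3) + i" using nz by simp
    finally show ?thesis using a by simp
  qed
  have e: "i*(n2*n3) + j*n3 + k = k + (i*n2+j)*n3" by (simp add: algebra_simps)
  have d2: "(i*(n2*n3) + j*n3 + k) mod n3 = k"
    unfolding e using assms by simp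
  have d3: "(i*(n2*n3) + j*n3 + k) div n3 = i*n2 + j"
    unfolding e using assms by simp
  have d4: "(i*n2 + j) mod n2 = j" using assms by simp
  show ?thesis unfolding sig_def d1 d2 d3 d4 ..
qed

lemma decomp3:
  fixes c n2 n3 :: nat
  shows "c = (c div (n2*n3))*(n2*n3) + ((c div n3) mod n2)*n3 + c mod n3"
proof -
  have 1: "c = (c div n3)*n3 + c mod n3" by simp
  have 2: "c div n3 = (c div n3 div n2)*n2 + (c div n3) mod n2" by simp
  have 3: "c div n3 div n2 = c div (n2*n3)" by (metis div_mult2_eq mult.commute)
  have "c = ((c div (n2*n3))*n2 + (c div n3) mod n2)*n3 + c mod n3"
    using 1 2 3 by metis
  thus ?thesis by (simp add: algebra_simps)
qed

lemma sig_bound: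
  fixes c n1 n2 n3 :: nat
  assumes "c < n1*n2*n3"
  shows "sig n2 n3 c < n1*n3*n2" "sig n3 n2 (sig n2 n3 c) = c"
proof -
  have pos: "n2 > 0" "n3 > 0" using assms by (auto intro: ccontr)
  define i where "i = c div (n2*n3)"
  define j where "j = (c div n3) mod n2"
  define k where "k = c mod n3"
  have jk: "j < n2" "k < n3" using pos by (auto simp: j_def k_def)
  have c: "c = i*(n2*n3) + j*n3 + k" unfolding i_def j_def k_def by (rule decomp3)
  have i: "i < n1" using assms unfolding i_def
    by (simp add: less_mult_imp_div_less mult.assoc)
  have s: "sig n2 n3 c = i*(n3*n2) + k*n2 + j" unfolding c by (rule sig_parts[OF jk])
  show "sig n3 n2 (sig n2 n3 c) = c" unfolding s using sig_parts[of k n3 j n2 i] jk c by simp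
  have "k*n2 + j < n3*n2"
  proof -
    have "k*n2 + j < k*n2 + n2" using jk by simp
    also have "\<dots> = (k+1)*n2" by simp
    also have "\<dots> \<le> n3*n2" using jk by (intro mult_right_mono) auto
    finally show ?thesis .
  qed
  hence "i*(n3*n2) + k*n2 + j < i*(n3*n2) + n3*n2" by simp
  also have "\<dots> = (i+1)*(n3*n2)" by simp
  also have "\<dots> \<le> n1*(n3*n2)" using i by (intro mult_right_mono) auto
  finally show "sig n2 n3 c < n1*n3*n2" unfolding s by (simp add: mult.assoc)
qed

lemma leg13_dmat:
  fixes f :: "nat \<Rightarrow> 'a::semiring_1"
  assumes n2: "n2 > 0"
  shows "leg13 n1 n2 n3 (dmat (n1*n3) f) = dmat (n1*n2*n3) (\<lambda>c. f ((c div (n2*n3))*n3 + c mod n3))"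
proof -
  define k where "k = (\<lambda>s. f (s div n2))"
  have K: "kron (dmat (n1*n3) f) (1\<^sub>m n2) = dmat (n1*n3*n2) k"
    unfolding k_def by (rule kron_dmat_one[OF n2])
  have PK: "flip23 n1 n3 n2 * dmat (n1*n3*n2) k =
     mat (n1*n2*n3) (n1*n3*n2) (\<lambda>(r,t). if r = sig n3 n2 t then k t else 0)"
  proof (rule eq_matI)
    fix r t assume rt: "r < dim_row (mat (n1*n2*n3) (n1*n3*n2) (\<lambda>(r,t). if r = sig n3 n2 t then k t else 0))"
        "t < dim_col (mat (n1*n2*n3) (n1*n3*n2) (\<lambda>(r,t). if r = sig n3 n2 t then k t else 0))"
    have "(flip23 n1 n3 n2 * dmat (n1*n3*n2) k) $$ (r,t) =
       (\<Sum>s\<in>{0..<n1*n3*n2}. flip23 n1 n3 n2 $$ (r,s) * dmat (n1*n3*n2) k $$ (s,t))"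
      using rt by (simp add: scalar_prod_def)
    also have "\<dots> = flip23 n1 n3 n2 $$ (r,t) * dmat (n1*n3*n2) k $$ (t,t)"
      by (rule sum_single) (use rt in auto)
    finally show "(flip23 n1 n3 n2 * dmat (n1*n3*n2) k) $$ (r,t) =
      mat (n1*n2*n3) (n1*n3*n2) (\<lambda>(r,t). if r = sig n3 n2 t then k t else 0) $$ (r,t)"
      using rt by (simp add: mult.commute mult.left_commute)
  qed auto
  show ?thesis unfolding leg13_def K PK
  proof (rule eq_matI)
    fix r c assume rc: "r < dim_row (dmat (n1*n2*n3) (\<lambda>c. f ((c div (n2*n3))*n3 + c mod n3)))"
      "c < dim_col (dmat (n1*n2*n3) (\<lambda>c. f ((c div (n2*n3))*n3 + c mod n3)))"
    hence rc': "r < n1*n2*n3" "c < n1*n2*n3" by auto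
    note sb = sig_bound[OF rc'(2)]
    have "(mat (n1*n2*n3) (n1*n3*n2) (\<lambda>(r,t). if r = sig n3 n2 t then k t else 0) * flip23 n1 n2 n3) $$ (r,c)
      = (\<Sum>t\<in>{0..<n1*n3*n2}. mat (n1*n2*n3) (n1*n3*n2) (\<lambda>(r,t). if r = sig n3 n2 t then k t else 0) $$ (r,t) * flip23 n1 n2 n3 $$ (t,c))"
      using rc' by (simp add: scalar_prod_def)
    also have "\<dots> = mat (n1*n2*n3) (n1*n3*n2) (\<lambda>(r,t). if r = sig n3 n2 t then k t else 0) $$ (r,sig n2 n3 c) * flip23 n1 n2 n3 $$ (sig n2 n3 c,c)"
      by (rule sum_single) (use rc' sb in auto)
    also have "\<dots> = (if r = c then k (sig n2 n3 c) else 0)"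
      using rc' sb by simp
    also have "k (sig n2 n3 c) = f ((c div (n2*n3))*n3 + c mod n3)"
    proof -
      have "sig n2 n3 c = (c div n3) mod n2 + ((c div (n2*n3))*n3 + c mod n3) * n2"
        unfolding sig_def by (simp add: algebra_simps)
      hence "sig n2 n3 c div n2 = (c div n3) mod n2 div n2 + ((c div (n2*n3))*n3 + c mod n3)"
        using n2 by simp
      hence "sig n2 n3 c div n2 = (c div (n2*n3))*n3 + c mod n3" using n2 by simp
      thus ?thesis by (simp add: k_def)
    qed
    finally show "(mat (n1*n2*n3) (n1*n3*n2) (\<lambda>(r,t). if r = sig n3 n2 t then k t else 0) * flip23 n1 n2 n3) $$ (r,c)
      = dmat (n1*n2*n3) (\<lambda>c. f ((c div (n2*n3))*n3 + c mod n3)) $$ (r,c)"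
      using rc' by simp
  qed auto
qed

lemma mult_dmat_right: assumes "dim_col A = n"
  shows "A * dmat n d = mat (dim_row A) n (\<lambda>(r,s). A $$ (r,s) * d s)"
proof (rule eq_matI)
  fix i j assume ij: "i < dim_row (mat (dim_row A) n (\<lambda>(r,s). A $$ (r,s) * d s))"
    "j < dim_col (mat (dim_row A) n (\<lambda>(r,s). A $$ (r,s) * d s))"
  hence "(A * dmat n d) $$ (i,j) = (\<Sum>k\<in>{0..<n}. A $$ (i,k) * dmat n d $$ (k,j))"
    using assms by (simp add: scalar_prod_def)
  also have "\<dots> = A $$ (i,j) * dmat n d $$ (j,j)"
    by (rule sum_single) (use ij in auto)
  finally show "(A * dmat n d) $$ (i,j) = mat (dim_row A) n (\<lambda>(r,s). A $$ (r,s) * d s) $$ (i,j)"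
    using ij by simp
qed (use assms in auto)

lemma kron_mid_right:
  fixes A B :: "'a::comm_ring_1 mat"
  assumes A: "A \<in> carrier_mat na m" and B: "B \<in> carrier_mat m nb" and p: "p > 0"
  shows "kron A (1\<^sub>m p) * dmat (m*p) d * kron B (1\<^sub>m p) =
    mat (na*p) (nb*p) (\<lambda>(r,c). if r mod p = c mod p then
       (\<Sum>a<m. A $$ (r div p, a) * d (a*p + c mod p) * B $$ (a, c div p)) else 0)"
  (is "?L = ?R")
proof (rule eq_matI)
  have M: "kron A (1\<^sub>m p) * dmat (m*p) d = mat (na*p) (m*p) (\<lambda>(r,s). kron A (1\<^sub>m p) $$ (r,s) * d s)"
    using A by (subst mult_dmat_right) auto
  fix r c assume rc: "r < dim_row ?R" "c < dim_col ?R"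
  hence rc': "r < na*p" "c < nb*p" by auto
  have cd: "c div p < nb" "r div p < na" using rc' p by (auto simp: less_mult_imp_div_less)
  have "?L $$ (r,c) = (\<Sum>s\<in>{0..<m*p}. kron A (1\<^sub>m p) $$ (r,s) * d s * kron B (1\<^sub>m p) $$ (s,c))"
    using rc' A B by (simp add: M scalar_prod_def)
  also have "\<dots> = (\<Sum>a<m. \<Sum>k<p. kron A (1\<^sub>m p) $$ (r,a*p+k) * d (a*p+k) * kron B (1\<^sub>m p) $$ (a*p+k,c))"
    by (rule sum_split_mult)
  also have "\<dots> = (\<Sum>a<m. if r mod p = c mod p then A $$ (r div p, a) * d (a*p + c mod p) * B $$ (a, c div p) else 0)"
  proof (rule sum.cong[OF refl])
    fix a assume a: "a \<in> {..<m}"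
    have bnd: "\<And>k. k < p \<Longrightarrow> a*p+k < m*p"
    proof -
      fix k assume "k < p"
      hence "a*p+k < a*p+p" by simp
      also have "\<dots> = (a+1)*p" by simp
      also have "\<dots> \<le> m*p" using a by (intro mult_right_mono) auto
      finally show "a*p+k < m*p" .
    qed
    have "(\<Sum>k<p. kron A (1\<^sub>m p) $$ (r,a*p+k) * d (a*p+k) * kron B (1\<^sub>m p) $$ (a*p+k,c))
        = kron A (1\<^sub>m p) $$ (r,a*p+c mod p) * d (a*p+c mod p) * kron B (1\<^sub>m p) $$ (a*p+c mod p,c)"
    proof (rule sum_single)
      fix k assume k: "k \<in> {..<p}" "k \<noteq> c mod p"
      have "kron B (1\<^sub>m p) $$ (a*p+k,c) = 0"
        using k bnd[of k] rc' A B p by simp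
      thus "kron A (1\<^sub>m p) $$ (r,a*p+k) * d (a*p+k) * kron B (1\<^sub>m p) $$ (a*p+k,c) = 0" by simp
    qed (use p in auto)
    also have "\<dots> = (if r mod p = c mod p then A $$ (r div p, a) * d (a*p + c mod p) * B $$ (a, c div p) else 0)"
      using bnd[of "c mod p"] rc' A B p a cd by simp
    finally show "(\<Sum>k<p. kron A (1\<^sub>m p) $$ (r,a*p+k) * d (a*p+k) * kron B (1\<^sub>m p) $$ (a*p+k,c))
       = (if r mod p = c mod p then A $$ (r div p, a) * d (a*p + c mod p) * B $$ (a, c div p) else 0)" .
  qed
  also have "\<dots> = ?R $$ (r,c)" using rc' by simp
  finally show "?L $$ (r,c) = ?R $$ (r,c)" .
qed (use A B in auto)

lemma kron_mid_left:
  fixes A B :: "'a::comm_ring_1 mat"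
  assumes A: "A \<in> carrier_mat na m" and B: "B \<in> carrier_mat m nb" and na: "na > 0" and nb: "nb > 0"
  shows "kron (1\<^sub>m p) A * dmat (p*m) d * kron (1\<^sub>m p) B =
    mat (p*na) (p*nb) (\<lambda>(r,c). if r div na = c div nb then
       (\<Sum>a<m. A $$ (r mod na, a) * d ((r div na)*m + a) * B $$ (a, c mod nb)) else 0)"
  (is "?L = ?R")
proof (rule eq_matI)
  have M: "kron (1\<^sub>m p) A * dmat (p*m) d = mat (p*na) (p*m) (\<lambda>(r,s). kron (1\<^sub>m p) A $$ (r,s) * d s)"
    using A by (subst mult_dmat_right) auto
  fix r c assume rc: "r < dim_row ?R" "c < dim_col ?R"
  hence rc': "r < p*na" "c < p*nb" by auto
  have cd: "c div nb < p" "r div na < p" "r mod na < na" "c mod nb < nb" using rc' na nb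
    by (auto simp: less_mult_imp_div_less mult.commute)
  have m: "m > 0" if "p > 0" "m \<noteq> 0" for m :: nat using that by simp
  have "?L $$ (r,c) = (\<Sum>s\<in>{0..<p*m}. kron (1\<^sub>m p) A $$ (r,s) * d s * kron (1\<^sub>m p) B $$ (s,c))"
    using rc' A B by (simp add: M scalar_prod_def)
  also have "\<dots> = (\<Sum>b<p. \<Sum>a<m. kron (1\<^sub>m p) A $$ (r,b*m+a) * d (b*m+a) * kron (1\<^sub>m p) B $$ (b*m+a,c))"
    by (rule sum_split_mult)
  also have "\<dots> = (\<Sum>b<p. if b = r div na then (\<Sum>a<m. kron (1\<^sub>m p) A $$ (r,b*m+a) * d (b*m+a) * kron (1\<^sub>m p) B $$ (b*m+a,c)) else 0)"
  proof (rule sum.cong[OF refl])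
    fix b assume b: "b \<in> {..<p}"
    have bnd: "\<And>a. a < m \<Longrightarrow> b*m+a < p*m"
    proof -
      fix a assume "a < m"
      hence "b*m+a < b*m+m" by simp
      also have "\<dots> = (b+1)*m" by simp
      also have "\<dots> \<le> p*m" using b by (intro mult_right_mono) auto
      finally show "b*m+a < p*m" .
    qed
    show "(\<Sum>a<m. kron (1\<^sub>m p) A $$ (r,b*m+a) * d (b*m+a) * kron (1\<^sub>m p) B $$ (b*m+a,c)) =
      (if b = r div na then (\<Sum>a<m. kron (1\<^sub>m p) A $$ (r,b*m+a) * d (b*m+a) * kron (1\<^sub>m p) B $$ (b*m+a,c)) else 0)"
    proof (cases "b = r div na")
      case False
      have "kron (1\<^sub>m p) A $$ (r,b*m+a) = 0" if "a < m" for a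
        using that bnd[OF that] rc' A cd False b by simp
      thus ?thesis using False by simp
    qed simp
  qed
  also have "\<dots> = (\<Sum>a<m. kron (1\<^sub>m p) A $$ (r,(r div na)*m+a) * d ((r div na)*m+a) * kron (1\<^sub>m p) B $$ ((r div na)*m+a,c))"
    using cd by simp
  also have "\<dots> = ?R $$ (r,c)"
  proof -
    have bnd: "(r div na)*m+a < p*m" if "a < m" for a
    proof -
      have "(r div na)*m+a < (r div na)*m+m" using that by simp
      also have "\<dots> = (r div na + 1)*m" by simp
      also have "\<dots> \<le> p*m" using cd by (intro mult_right_mono) auto
      finally show ?thesis .
    qed
    show ?thesis
      using rc' cd A B bnd by (auto intro!: sum.cong)
  qed
  finally show "?L $$ (r,c) = ?R $$ (r,c)" .
qed (use A B in auto)

lemma qnum_nat: "qnum q (int m) = (q^m - inverse (q^m)) / (q - inverse q)"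
  by (simp add: qnum_def power_int_minus)

lemma qnum_zero[simp]: "qnum q 0 = 0" by (simp add: qnum_def)

lemma q_den_nz:
  fixes q :: "'a::field_char_0"
  assumes q_nz: "q \<noteq> 0" and nr: "\<forall>k::nat. k > 0 \<longrightarrow> q ^ k \<noteq> 1"
  shows "q - inverse q \<noteq> 0"
proof
  assume "q - inverse q = 0"
  hence "q * q = 1" using q_nz by (simp add: field_simps)
  thus False using nr[rule_format, of 2] by (simp add: power2_eq_square)
qed

lemma qnum_nz:
  fixes q :: "'a::field_char_0"
  assumes q_nz: "q \<noteq> 0" and nr: "\<forall>k::nat. k > 0 \<longrightarrow> q ^ k \<noteq> 1" and m: "m > 0"
  shows "qnum q (int m) \<noteq> 0"
proof
  assume "qnum q (int m) = 0"
  hence "q^m - inverse (q^m) = 0" using q_den_nz[OF q_nz nr] by (simp add: qnum_nat)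
  hence "q^m * q^m = 1" using q_nz by (simp add: field_simps)
  hence "q^(2*m) = 1" by (simp add: power_add[symmetric] mult_2)
  thus False using nr m by auto
qed

lemma qsum_nz:
  fixes q :: "'a::field_char_0"
  assumes q_nz: "q \<noteq> 0" and nr: "\<forall>k::nat. k > 0 \<longrightarrow> q ^ k \<noteq> 1" and N: "a + b > 0"
  shows "qnum q (int a) + qnum q (int b) \<noteq> 0"
proof
  assume "qnum q (int a) + qnum q (int b) = 0"
  hence "q^a - inverse (q^a) + (q^b - inverse (q^b)) = 0" using q_den_nz[OF q_nz nr]
    by (simp add: qnum_nat add_divide_distrib[symmetric])
  hence "(q^a - inverse (q^a) + (q^b - inverse (q^b))) * (q^a * q^b) = 0" by simp
  moreover have "\<And>X Y::'a. X \<noteq> 0 \<Longrightarrow> Y \<noteq> 0 \<Longrightarrow>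
     (X - inverse X + (Y - inverse Y)) * (X * Y) = (X + Y) * (X * Y - 1)"
    by (simp add: field_simps)
  ultimately have "(q^a + q^b) * (q^a * q^b - 1) = 0" using q_nz by simp
  moreover have "q^a * q^b - 1 \<noteq> 0" using nr N by (simp add: power_add[symmetric])
  ultimately have s: "q^a + q^b = 0" by simp
  have "\<exists>k. q^k = - 1" 
  proof (cases "a \<le> b")
    case True
    then obtain k where "b = a + k" using le_Suc_ex by blast
    hence "q^a * (1 + q^k) = 0" using s by (simp add: power_add algebra_simps)
    hence "q^k = -1" using q_nz by (simp add: add_eq_0_iff)
    thus ?thesis by blast
  next
    case False
    then obtain k where "a = b + k" by (metis le_Suc_ex nat_le_linear)
    hence "q^b * (1 + q^k) = 0" using s by (simp add: power_add algebra_simps)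
    hence "q^k = -1" using q_nz by (simp add: add_eq_0_iff)
    thus ?thesis by blast
  qed
  then obtain k where k: "q^k = -1" by blast
  hence "q^(2*k) = 1" by (simp add: power_mult power2_eq_square[symmetric] mult.commute)
  moreover have "k > 0" using k by (cases k) auto
  ultimately show False using nr by auto
qed

lemma sum_two:
  assumes "finite S" "a \<in> S" "b \<in> S" "a \<noteq> b" "\<And>x. x \<in> S \<Longrightarrow> x \<noteq> a \<Longrightarrow> x \<noteq> b \<Longrightarrow> f x = 0"
  shows "sum f S = f a + f b"
proof -
  have "sum f S = sum f {a,b}"
    by (rule sum.mono_neutral_left[symmetric]) (use assms in auto)
  thus ?thesis using assms by simp
qed

lemma alg2:
  fixes sA sB sC A B C T :: "'a::field"
  assumes "sA*sA = A" "sB*sB = B" "sC \<noteq> 0" "A+B \<noteq> 0"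
  shows "sA*sC/(A+B)*T*(sA/sC) + sB*sC/(A+B)*T*(sB/sC) = T"
proof -
  have 1: "sA*sC/(A+B)*T*(sA/sC) = (sA*sA)*T/(A+B)" using assms(3) by (simp add: field_simps)
  have 2: "sB*sC/(A+B)*T*(sB/sC) = (sB*sB)*T/(A+B)" using assms(3) by (simp add: field_simps)
  have "sA*sC/(A+B)*T*(sA/sC) + sB*sC/(A+B)*T*(sB/sC) = (A+B)*T/(A+B)"
    unfolding 1 2 assms(1,2) by (simp add: add_divide_distrib algebra_simps)
  also have "\<dots> = T" using assms by simp
  finally show ?thesis .
qed

lemma FE_core:
  fixes q :: "'a::field_char_0" and sq :: "'a \<Rightarrow> 'a"
  assumes q_nz: "q \<noteq> 0" and nr: "\<forall>k::nat. k > 0 \<longrightarrow> q ^ k \<noteq> 1"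
    and sq: "\<forall>x. sq x * sq x = x" and n: "n \<ge> 1"
    and x: "x < n+2" and y: "y < n+2"
    and d1: "\<And>x. x \<le> n \<Longrightarrow> d x = T x"
    and d2: "\<And>x. 1 \<le> x \<Longrightarrow> x \<le> n+1 \<Longrightarrow> d (x+n) = T x"
  shows "(\<Sum>a<2*n+2. Fmat q sq n $$ (x,a) * d a * Emat q sq n $$ (a,y)) = (if x = y then T x else 0)"
proof (cases "x = y")
  case False
  have "Fmat q sq n $$ (x,a) * d a * Emat q sq n $$ (a,y) = 0" if "a < 2*n+2" for a
    using that x y False by (auto simp: Fmat_def Emat_def)
  thus ?thesis using False by (intro trans[OF sum.neutral]) auto
next
  case True
  note y = True
  define A where "A = qnum q (int n + 1 - int x)"
  define B where "B = qnum q (int x)"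
  define C where "C = qnum q (int n + 1)"
  have Cnz: "C \<noteq> 0" unfolding C_def using qnum_nz[OF q_nz nr, of "n+1"] by (simp add: add.commute)
  have sCnz: "sq C \<noteq> 0" using Cnz sq by (metis mult_zero_left)
  have ABnz: "A + B \<noteq> 0" unfolding A_def B_def
    using qsum_nz[OF q_nz nr, of "n+1-x" x] x by (simp add: of_nat_diff add.commute)
  have ex: "\<And>a. a < 2*n+2 \<Longrightarrow> Emat q sq n $$ (a,x) = (if a \<le> n \<and> x = a then sq (qnum q (int n + 1 - int a)) / sq C
              else if n + 1 \<le> a \<and> x = a - n then sq (qnum q (int a - int n)) / sq C else 0)"
    using x by (simp add: Emat_def C_def)
  have fx: "\<And>a. a < 2*n+2 \<Longrightarrow> Fmat q sq n $$ (x,a) = (if a \<le> n \<and> x = a then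
                 sq (qnum q (int n + 1 - int a)) * sq C / (qnum q (int n + 1 - int a) + qnum q (int a))
              else if n + 1 \<le> a \<and> x = a - n then
                 sq (qnum q (int a - int n)) * sq C / (qnum q (2 * int n + 1 - int a) + qnum q (int a - int n))
              else 0)"
    using x by (simp add: Fmat_def C_def)
  have zero: "Fmat q sq n $$ (x,a) * d a * Emat q sq n $$ (a,x) = 0"
    if "a < 2*n+2" "\<not> (a = x \<and> x \<le> n)" "\<not> (a = x + n \<and> 1 \<le> x)" for a
    using that fx ex n by auto
  show ?thesis
  proof (cases "x = 0")
    case True
    have "(\<Sum>a<2*n+2. Fmat q sq n $$ (x,a) * d a * Emat q sq n $$ (a,x)) =
        Fmat q sq n $$ (x,x) * d x * Emat q sq n $$ (x,x)"
      using y True zero n by (intro sum_single) auto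
    also have "\<dots> = sq C * sq C / (C + 0) * T 0 * (sq C / sq C)"
      using True fx ex d1[of 0] n by (simp add: C_def)
    also have "\<dots> = T 0" using sq Cnz sCnz by simp
    finally show ?thesis using True y by simp
  next
    case False
    show ?thesis
    proof (cases "x = n+1")
      case True
      have "(\<Sum>a<2*n+2. Fmat q sq n $$ (x,a) * d a * Emat q sq n $$ (a,x)) =
          Fmat q sq n $$ (x,x+n) * d (x+n) * Emat q sq n $$ (x+n,x)"
        using y True zero n by (intro sum_single) auto
      also have "\<dots> = sq C * sq C / (0 + C) * T x * (sq C / sq C)"
        using True fx ex d2[of x] n by (simp add: C_def algebra_simps)
      also have "\<dots> = T x" using sq Cnz sCnz by simp
      finally show ?thesis using True y by simp
    next
      case False2: False
      have xn: "1 \<le> x" "x \<le> n" using False False2 x by auto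
      have "(\<Sum>a<2*n+2. Fmat q sq n $$ (x,a) * d a * Emat q sq n $$ (a,x)) =
          Fmat q sq n $$ (x,x) * d x * Emat q sq n $$ (x,x) + Fmat q sq n $$ (x,x+n) * d (x+n) * Emat q sq n $$ (x+n,x)"
        using y xn zero n by (intro sum_two) auto
      also have "\<dots> = sq A * sq C / (A + B) * T x * (sq A / sq C) + sq B * sq C / (A + B) * T x * (sq B / sq C)"
      proof -
        have e1: "Fmat q sq n $$ (x,x) = sq A * sq C / (A + B)" using fx[of x] xn by (simp add: A_def B_def)
        have e2: "Emat q sq n $$ (x,x) = sq A / sq C" using ex[of x] xn by (simp add: A_def)
        have i1: "int (x+n) - int n = int x" by simp
        have i2: "2 * int n + 1 - int (x+n) = int n + 1 - int x" by simp
        have e3: "Fmat q sq n $$ (x,x+n) = sq B * sq C / (A + B)" using fx[of "x+n"] xn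
          unfolding i1 i2 by (simp add: A_def B_def add.commute)
        have e4: "Emat q sq n $$ (x+n,x) = sq B / sq C" using ex[of "x+n"] xn
          unfolding i1 by (simp add: B_def)
        show ?thesis using e1 e2 e3 e4 d1[of x] d2[of x] xn by simp
      qed
      also have "\<dots> = T x" by (rule alg2) (use sq sCnz ABnz in auto)
      finally show ?thesis using y by simp
    qed
  qed
qed

definition rf :: "'a::field \<Rightarrow> nat \<Rightarrow> nat \<Rightarrow> nat \<Rightarrow> 'a" where
  "rf rhalf n1 n2 r = rhalf powi ((int n1 - 2 * int (r div (n2 + 1))) * (int n2 - 2 * int (r mod (n2 + 1))))"

lemma Rhat_dmat: "Rhat rhalf n1 n2 = dmat ((n1+1)*(n2+1)) (rf rhalf n1 n2)"
  unfolding Rhat_def dmat_def rf_def ..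

lemma rf_at: "k < n2 + 1 \<Longrightarrow> rf rhalf n1 n2 (a*(n2+1)+k) = rhalf powi ((int n1 - 2*int a)*(int n2 - 2*int k))"
proof -
  assume k: "k < n2 + 1"
  have dm: "\<And>m::nat. k < m \<Longrightarrow> (a*m+k) div m = a \<and> (a*m+k) mod m = k" by simp
  have "(a*(n2+1)+k) div (n2+1) = a" "(a*(n2+1)+k) mod (n2+1) = k" using dm[OF k] by simp_all
  thus ?thesis unfolding rf_def by simp
qed

lemma pw: "(r::'a::field) \<noteq> 0 \<Longrightarrow> e1 + e2 = e \<Longrightarrow> r powi e1 * r powi e2 = r powi e"
  by (metis power_int_add)

lemma Fmat_carrier: "Fmat q sq n \<in> carrier_mat (n+2) (2*n+2)" by (simp add: Fmat_def)
lemma Emat_carrier: "Emat q sq n \<in> carrier_mat (2*n+2) (n+2)" by (simp add: Emat_def)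

lemma lt_mult: "a < m \<Longrightarrow> k < (p::nat) \<Longrightarrow> a*p+k < m*p"
proof -
  assume "a < m" "k < p"
  hence "a*p+k < a*p+p" by simp
  also have "\<dots> = (a+1)*p" by simp
  also have "\<dots> \<le> m*p" using \<open>a < m\<close> by (intro mult_right_mono) auto
  finally show ?thesis .
qed

lemma partA:
  fixes q rhalf :: "'a::field_char_0" and sq :: "'a \<Rightarrow> 'a" and n1 n2 :: nat
  assumes q_nz: "q \<noteq> 0" and nr: "\<forall>k::nat. k > 0 \<longrightarrow> q ^ k \<noteq> 1"
    and rh: "rhalf \<noteq> 0" and sq: "\<forall>x. sq x * sq x = x" and n1: "n1 \<ge> 1"
  defines "p \<equiv> n2 + 1"
  defines "d \<equiv> (\<lambda>s. rf rhalf 1 n2 ((s div ((n1+1)*p))*p + s mod p) * rf rhalf n1 n2 (s mod ((n1+1)*p)))"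
  shows "leg13 2 (n1 + 1) (n2 + 1) (Rhat rhalf 1 n2) * leg23 2 (Rhat rhalf n1 n2) = dmat ((2*n1+2)*p) d"
    "leg23 2 (Rhat rhalf n1 n2) * leg13 2 (n1 + 1) (n2 + 1) (Rhat rhalf 1 n2) = dmat ((2*n1+2)*p) d"
    "Rhat rhalf (n1 + 1) n2 = leg12 (n2 + 1) (Fmat q sq n1) * dmat ((2*n1+2)*p) d * leg12 (n2 + 1) (Emat q sq n1)"
proof -
  have p: "p > 0" by (simp add: p_def)
  have e1: "Rhat rhalf 1 n2 = dmat (2*p) (rf rhalf 1 n2)" by (simp add: Rhat_dmat p_def mult_2)
  have L13: "leg13 2 (n1 + 1) (n2 + 1) (Rhat rhalf 1 n2) = dmat ((2*n1+2)*p)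
      (\<lambda>c. rf rhalf 1 n2 ((c div ((n1+1)*p))*p + c mod p))"
    unfolding e1 p_def[symmetric] by (subst leg13_dmat) (auto simp: algebra_simps)
  have L23: "leg23 2 (Rhat rhalf n1 n2) = dmat ((2*n1+2)*p) (\<lambda>s. rf rhalf n1 n2 (s mod ((n1+1)*p)))"
    unfolding leg23_def Rhat_dmat p_def[symmetric] using p by (subst kron_one_dmat) (auto simp: algebra_simps)
  show D1: "leg13 2 (n1 + 1) (n2 + 1) (Rhat rhalf 1 n2) * leg23 2 (Rhat rhalf n1 n2) = dmat ((2*n1+2)*p) d"
    unfolding L13 L23 dmat_mult d_def ..
  show "leg23 2 (Rhat rhalf n1 n2) * leg13 2 (n1 + 1) (n2 + 1) (Rhat rhalf 1 n2) = dmat ((2*n1+2)*p) d"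
    unfolding L13 L23 dmat_mult d_def by (simp add: mult.commute)
  have M: "leg12 (n2 + 1) (Fmat q sq n1) * dmat ((2*n1+2)*p) d * leg12 (n2 + 1) (Emat q sq n1) =
    mat ((n1+2)*p) ((n1+2)*p) (\<lambda>(r,c). if r mod p = c mod p then
       (\<Sum>a<2*n1+2. Fmat q sq n1 $$ (r div p, a) * d (a*p + c mod p) * Emat q sq n1 $$ (a, c div p)) else 0)"
    unfolding leg12_def p_def[symmetric] by (rule kron_mid_right[OF Fmat_carrier Emat_carrier p])
  show "Rhat rhalf (n1 + 1) n2 = leg12 (n2 + 1) (Fmat q sq n1) * dmat ((2*n1+2)*p) d * leg12 (n2 + 1) (Emat q sq n1)"
    unfolding M
  proof (rule eq_matI)
    fix r c assume rc: "r < dim_row (mat ((n1+2)*p) ((n1+2)*p) (\<lambda>(r,c). if r mod p = c mod p then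
       (\<Sum>a<2*n1+2. Fmat q sq n1 $$ (r div p, a) * d (a*p + c mod p) * Emat q sq n1 $$ (a, c div p)) else 0))"
      "c < dim_col (mat ((n1+2)*p) ((n1+2)*p) (\<lambda>(r,c). if r mod p = c mod p then
       (\<Sum>a<2*n1+2. Fmat q sq n1 $$ (r div p, a) * d (a*p + c mod p) * Emat q sq n1 $$ (a, c div p)) else 0))"
    hence rc': "r < (n1+2)*p" "c < (n1+2)*p" by auto
    have xy: "r div p < n1 + 2" "c div p < n1 + 2" using rc' p by (auto simp: less_mult_imp_div_less)
    have LHS: "Rhat rhalf (n1 + 1) n2 $$ (r,c) = (if r = c then rf rhalf (n1+1) n2 r else 0)"
      using rc' by (simp add: Rhat_dmat p_def)
    show "Rhat rhalf (n1 + 1) n2 $$ (r,c) = mat ((n1+2)*p) ((n1+2)*p) (\<lambda>(r,c). if r mod p = c mod p then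
       (\<Sum>a<2*n1+2. Fmat q sq n1 $$ (r div p, a) * d (a*p + c mod p) * Emat q sq n1 $$ (a, c div p)) else 0) $$ (r,c)"
    proof (cases "r mod p = c mod p")
      case False
      hence "r \<noteq> c" by auto
      thus ?thesis using LHS False rc' by simp
    next
      case True
      define k where "k = c mod p"
      have k: "k < p" using p by (simp add: k_def)
      have core: "(\<Sum>a<2*n1+2. Fmat q sq n1 $$ (r div p, a) * (\<lambda>a. d (a*p + k)) a * Emat q sq n1 $$ (a, c div p))
         = (if r div p = c div p then (\<lambda>x. rf rhalf (n1+1) n2 (x*p+k)) (r div p) else 0)"
      proof (rule FE_core[OF q_nz nr sq n1 xy])
        fix x assume x: "x \<le> n1"
        have s: "x*p+k < (n1+1)*p" using x k by (intro lt_mult) auto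
        have "d (x*p+k) = rf rhalf 1 n2 k * rf rhalf n1 n2 (x*p+k)"
          using s k by (simp add: d_def)
        also have "\<dots> = rhalf powi ((1 - 2*int 0)*(int n2 - 2*int k)) * rhalf powi ((int n1 - 2*int x)*(int n2 - 2*int k))"
          using rf_at[of k n2 rhalf 1 0] rf_at[of k n2 rhalf n1 x] k by (simp add: p_def)
        also have "\<dots> = rhalf powi ((int (n1+1) - 2*int x)*(int n2 - 2*int k))"
          by (rule pw[OF rh]) (simp add: algebra_simps)
        also have "\<dots> = rf rhalf (n1+1) n2 (x*p+k)" using rf_at[of k n2 rhalf "n1+1" x] k by (simp add: p_def)
        finally show "d (x*p+k) = rf rhalf (n1+1) n2 (x*p+k)" .
      next
        fix x assume x: "1 \<le> x" "x \<le> n1 + 1"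
        have s0: "(x-1)*p+k < (n1+1)*p" using x k by (intro lt_mult) auto
        have se: "(x+n1)*p+k = (n1+1)*p + ((x-1)*p+k)" using x by (cases x) (auto simp: algebra_simps)
        have dv: "((x+n1)*p+k) div ((n1+1)*p) = 1" unfolding se using s0 p by simp
        have md: "((x+n1)*p+k) mod ((n1+1)*p) = (x-1)*p+k" unfolding se using s0 p by simp
        have "d ((x+n1)*p+k) = rf rhalf 1 n2 (1*p+k) * rf rhalf n1 n2 ((x-1)*p+k)"
          unfolding d_def dv md using k by simp
        also have "\<dots> = rhalf powi ((1 - 2*int 1)*(int n2 - 2*int k)) * rhalf powi ((int n1 - 2*int (x-1))*(int n2 - 2*int k))"
          using rf_at[of k n2 rhalf 1 1] rf_at[of k n2 rhalf n1 "x-1"] k by (simp add: p_def)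
        also have "\<dots> = rhalf powi ((int (n1+1) - 2*int x)*(int n2 - 2*int k))"
          by (rule pw[OF rh]) (use x in \<open>simp add: algebra_simps of_nat_diff\<close>)
        also have "\<dots> = rf rhalf (n1+1) n2 (x*p+k)" using rf_at[of k n2 rhalf "n1+1" x] k by (simp add: p_def)
        finally show "d ((x+n1)*p+k) = rf rhalf (n1+1) n2 (x*p+k)" .
      qed
      have rcd: "r = c \<longleftrightarrow> r div p = c div p" using True divmod_eq[OF p, of r c] by auto
      have rr: "(r div p)*p + k = r" using True by (simp add: k_def[symmetric]) (metis div_mult_mod_eq k_def True)
      have R: "mat ((n1+2)*p) ((n1+2)*p) (\<lambda>(r,c). if r mod p = c mod p then
         (\<Sum>a<2*n1+2. Fmat q sq n1 $$ (r div p, a) * d (a*p + c mod p) * Emat q sq n1 $$ (a, c div p)) else 0) $$ (r,c)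
         = (\<Sum>a<2*n1+2. Fmat q sq n1 $$ (r div p, a) * d (a*p + k) * Emat q sq n1 $$ (a, c div p))"
        using rc' True by (simp add: k_def del: sum.lessThan_Suc)
      have C: "(\<Sum>a<2*n1+2. Fmat q sq n1 $$ (r div p, a) * d (a*p + k) * Emat q sq n1 $$ (a, c div p))
         = (if r = c then rf rhalf (n1+1) n2 r else 0)"
        using core rr rcd by (auto simp del: sum.lessThan_Suc)
      show ?thesis unfolding R C LHS ..
    qed
  qed (auto simp: Rhat_dmat p_def)
qed

lemma dm: "k < (m::nat) \<Longrightarrow> (a*m+k) div m = a \<and> (a*m+k) mod m = k" by simp

lemma partB:
  fixes q rhalf :: "'a::field_char_0" and sq :: "'a \<Rightarrow> 'a" and n1 n2 :: nat
  assumes q_nz: "q \<noteq> 0" and nr: "\<forall>k::nat. k > 0 \<longrightarrow> q ^ k \<noteq> 1"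
    and rh: "rhalf \<noteq> 0" and sq: "\<forall>x. sq x * sq x = x" and n2: "n2 \<ge> 1"
  defines "p \<equiv> n1 + 1"
  defines "d \<equiv> (\<lambda>s. rf rhalf n1 1 (s div (n2+1)) * rf rhalf n1 n2 ((s div (2*(n2+1)))*(n2+1) + s mod (n2+1)))"
  shows "leg12 (n2 + 1) (Rhat rhalf n1 1) * leg13 (n1 + 1) 2 (n2 + 1) (Rhat rhalf n1 n2) = dmat (p*(2*n2+2)) d"
    "leg13 (n1 + 1) 2 (n2 + 1) (Rhat rhalf n1 n2) * leg12 (n2 + 1) (Rhat rhalf n1 1) = dmat (p*(2*n2+2)) d"
    "Rhat rhalf n1 (n2 + 1) = leg23 (n1 + 1) (Fmat q sq n2) * dmat (p*(2*n2+2)) d * leg23 (n1 + 1) (Emat q sq n2)"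
proof -
  have p: "p > 0" by (simp add: p_def)
  have e1: "Rhat rhalf n1 1 = dmat (p*2) (rf rhalf n1 1)" by (simp add: Rhat_dmat p_def mult_2_right)
  have L12: "leg12 (n2 + 1) (Rhat rhalf n1 1) = dmat (p*(2*n2+2)) (\<lambda>s. rf rhalf n1 1 (s div (n2+1)))"
    unfolding e1 leg12_def by (subst kron_dmat_one) (auto simp: algebra_simps)
  have L13: "leg13 (n1 + 1) 2 (n2 + 1) (Rhat rhalf n1 n2) = dmat (p*(2*n2+2))
      (\<lambda>s. rf rhalf n1 n2 ((s div (2*(n2+1)))*(n2+1) + s mod (n2+1)))"
    unfolding Rhat_dmat p_def[symmetric] by (subst leg13_dmat) (auto simp: algebra_simps)
  show D1: "leg12 (n2 + 1) (Rhat rhalf n1 1) * leg13 (n1 + 1) 2 (n2 + 1) (Rhat rhalf n1 n2) = dmat (p*(2*n2+2)) d"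
    unfolding L13 L12 dmat_mult d_def ..
  show "leg13 (n1 + 1) 2 (n2 + 1) (Rhat rhalf n1 n2) * leg12 (n2 + 1) (Rhat rhalf n1 1) = dmat (p*(2*n2+2)) d"
    unfolding L13 L12 dmat_mult d_def by (simp add: mult.commute)
  define na where "na = n2 + 2"
  have na: "na > 0" by (simp add: na_def)
  have M: "leg23 (n1 + 1) (Fmat q sq n2) * dmat (p*(2*n2+2)) d * leg23 (n1 + 1) (Emat q sq n2) =
    mat (p*na) (p*na) (\<lambda>(r,c). if r div na = c div na then
       (\<Sum>a<2*n2+2. Fmat q sq n2 $$ (r mod na, a) * d ((r div na)*(2*n2+2) + a) * Emat q sq n2 $$ (a, c mod na)) else 0)"
    unfolding leg23_def p_def[symmetric] na_def by (rule kron_mid_left[OF Fmat_carrier Emat_carrier]) auto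
  show "Rhat rhalf n1 (n2 + 1) = leg23 (n1 + 1) (Fmat q sq n2) * dmat (p*(2*n2+2)) d * leg23 (n1 + 1) (Emat q sq n2)"
    unfolding M
  proof (rule eq_matI)
    fix r c assume rc: "r < dim_row (mat (p*na) (p*na) (\<lambda>(r,c). if r div na = c div na then
       (\<Sum>a<2*n2+2. Fmat q sq n2 $$ (r mod na, a) * d ((r div na)*(2*n2+2) + a) * Emat q sq n2 $$ (a, c mod na)) else 0))"
      "c < dim_col (mat (p*na) (p*na) (\<lambda>(r,c). if r div na = c div na then
       (\<Sum>a<2*n2+2. Fmat q sq n2 $$ (r mod na, a) * d ((r div na)*(2*n2+2) + a) * Emat q sq n2 $$ (a, c mod na)) else 0))"
    hence rc': "r < p*na" "c < p*na" by auto
    have xy: "r mod na < n2 + 2" "c mod na < n2 + 2" using na by (auto simp: na_def)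
    have LHS: "Rhat rhalf n1 (n2 + 1) $$ (r,c) = (if r = c then rf rhalf n1 (n2+1) r else 0)"
      using rc' by (simp add: Rhat_dmat p_def na_def)
    show "Rhat rhalf n1 (n2 + 1) $$ (r,c) = mat (p*na) (p*na) (\<lambda>(r,c). if r div na = c div na then
       (\<Sum>a<2*n2+2. Fmat q sq n2 $$ (r mod na, a) * d ((r div na)*(2*n2+2) + a) * Emat q sq n2 $$ (a, c mod na)) else 0) $$ (r,c)"
    proof (cases "r div na = c div na")
      case False
      hence "r \<noteq> c" by auto
      thus ?thesis using LHS False rc' by simp
    next
      case True
      define b where "b = r div na"
      have core: "(\<Sum>a<2*n2+2. Fmat q sq n2 $$ (r mod na, a) * (\<lambda>a. d (b*(2*n2+2) + a)) a * Emat q sq n2 $$ (a, c mod na))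
         = (if r mod na = c mod na then (\<lambda>x. rf rhalf n1 (n2+1) (b*(n2+2)+x)) (r mod na) else 0)"
      proof (rule FE_core[OF q_nz nr sq n2 xy])
        fix x assume x: "x \<le> n2"
        have s1: "b*(2*n2+2) + x = (2*b)*(n2+1) + x" by (simp add: algebra_simps)
        have s2: "b*(2*n2+2) + x = b*(2*(n2+1)) + x" by (simp add: algebra_simps)
        have x1: "x < n2 + 1" "x < 2*(n2+1)" using x by auto
        have t1: "(b*(2*n2+2)+x) div (n2+1) = 2*b" unfolding s1 using dm[OF x1(1)] by blast
        have t2: "(b*(2*n2+2)+x) div (2*(n2+1)) = b" unfolding s2 using dm[OF x1(2)] by blast
        have t3: "(b*(2*n2+2)+x) mod (n2+1) = x" unfolding s1 using dm[OF x1(1)] by blast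
        have t4: "2*b = b*(1+1)+0" by simp
        have "d (b*(2*n2+2) + x) = rf rhalf n1 1 (b*(1+1)+0) * rf rhalf n1 n2 (b*(n2+1) + x)"
          unfolding d_def t1 t2 t3 t4 ..
        also have "\<dots> = rhalf powi ((int n1 - 2*int b)*(int 1 - 2*int 0)) * rhalf powi ((int n1 - 2*int b)*(int n2 - 2*int x))"
          using rf_at[of 0 1 rhalf n1 b] rf_at[of x n2 rhalf n1 b] x1 by simp
        also have "\<dots> = rhalf powi ((int n1 - 2*int b)*(int (n2+1) - 2*int x))"
          by (rule pw[OF rh]) (simp add: algebra_simps)
        also have "\<dots> = rf rhalf n1 (n2+1) (b*(n2+2)+x)" using rf_at[of x "n2+1" rhalf n1 b] x by simp
        finally show "d (b*(2*n2+2) + x) = rf rhalf n1 (n2+1) (b*(n2+2)+x)" .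
      next
        fix x assume x: "1 \<le> x" "x \<le> n2 + 1"
        have s1: "b*(2*n2+2) + (x+n2) = (b*(1+1)+1)*(n2+1) + (x-1)" using x by (cases x) (auto simp: algebra_simps)
        have s2: "b*(2*n2+2) + (x+n2) = b*(2*(n2+1)) + ((n2+1) + (x-1))" using x by (cases x) (auto simp: algebra_simps)
        have s3: "(n2+1) + (x-1) = 1*(n2+1) + (x-1)" by simp
        have x1: "x - 1 < n2 + 1" "(n2+1) + (x-1) < 2*(n2+1)" using x by auto
        have "d (b*(2*n2+2) + (x+n2)) = rf rhalf n1 1 (b*(1+1)+1) * rf rhalf n1 n2 (b*(n2+1) + (x-1))"
          unfolding d_def s1 using dm[OF x1(1), of "b*(1+1)+1"] dm[OF x1(2), of b] dm[OF x1(1), of 1] s2 s1 s3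
          by (metis)
        also have "\<dots> = rhalf powi ((int n1 - 2*int b)*(int 1 - 2*int 1)) * rhalf powi ((int n1 - 2*int b)*(int n2 - 2*int (x-1)))"
          using rf_at[of 1 1 rhalf n1 b] rf_at[of "x-1" n2 rhalf n1 b] x1 by simp
        also have "\<dots> = rhalf powi ((int n1 - 2*int b)*(int (n2+1) - 2*int x))"
          by (rule pw[OF rh]) (use x in \<open>simp add: algebra_simps of_nat_diff\<close>)
        also have "\<dots> = rf rhalf n1 (n2+1) (b*(n2+2)+x)" using rf_at[of x "n2+1" rhalf n1 b] x by simp
        finally show "d (b*(2*n2+2) + (x+n2)) = rf rhalf n1 (n2+1) (b*(n2+2)+x)" .
      qed
      have rcd: "r = c \<longleftrightarrow> r mod na = c mod na" using True divmod_eq[OF na, of r c] by auto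
      have rr: "b*(n2+2) + r mod na = r" unfolding b_def na_def[symmetric] by simp
      have R: "mat (p*na) (p*na) (\<lambda>(r,c). if r div na = c div na then
       (\<Sum>a<2*n2+2. Fmat q sq n2 $$ (r mod na, a) * d ((r div na)*(2*n2+2) + a) * Emat q sq n2 $$ (a, c mod na)) else 0) $$ (r,c)
         = (\<Sum>a<2*n2+2. Fmat q sq n2 $$ (r mod na, a) * d (b*(2*n2+2) + a) * Emat q sq n2 $$ (a, c mod na))"
        using rc' True by (simp add: b_def del: sum.lessThan_Suc)
      have C: "(\<Sum>a<2*n2+2. Fmat q sq n2 $$ (r mod na, a) * d (b*(2*n2+2) + a) * Emat q sq n2 $$ (a, c mod na))
         = (if r = c then rf rhalf n1 (n2+1) r else 0)"
        using core rr rcd by (auto simp del: sum.lessThan_Suc)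
      show ?thesis unfolding R C LHS ..
    qed
  qed (auto simp: Rhat_dmat p_def na_def)
qed

lemma Fmat_dims: "dim_row (Fmat q sq n) = n+2" "dim_col (Fmat q sq n) = 2*n+2" by (simp_all add: Fmat_def)
lemma Rhat_dims: "dim_row (Rhat r n1 n2) = (n1+1)*(n2+1)" "dim_col (Rhat r n1 n2) = (n1+1)*(n2+1)" by (simp_all add: Rhat_def)
lemma leg12_carrier: "leg12 n3 X \<in> carrier_mat (dim_row X * n3) (dim_col X * n3)"
  unfolding leg12_def by (rule carrier_matI) (simp_all only: kron_dims index_one_mat(2,3))
lemma leg23_carrier: "leg23 n1 X \<in> carrier_mat (n1 * dim_row X) (n1 * dim_col X)"
  unfolding leg23_def by (rule carrier_matI) (simp_all only: kron_dims index_one_mat(2,3))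
lemma leg13_carrier: "leg13 n1 n2 n3 X \<in> carrier_mat (n1*n2*n3) (n1*n2*n3)"
  unfolding leg13_def by (rule carrier_matI) (simp_all only: index_mult_mat(2,3) flip23_dims)

theorem lemma5p2:
  fixes q rhalf :: "'a::field_char_0" and sq :: "'a \<Rightarrow> 'a" and n1 n2 :: nat
  assumes all_sqrt: "\<forall>x::'a. \<exists>y. y * y = x"
    and q_nz: "q \<noteq> 0"
    and q_not_root: "\<forall>k::nat. k > 0 \<longrightarrow> q ^ k \<noteq> 1"
    and rhalf: "rhalf * rhalf = q"
    and sq: "\<forall>x. sq x * sq x = x"
    and n1: "n1 \<ge> 1" and n2: "n2 \<ge> 1"
  shows
    "(Rhat rhalf (n1 + 1) n2 =
       leg12 (n2 + 1) (Fmat q sq n1) * leg13 2 (n1 + 1) (n2 + 1) (Rhat rhalf 1 n2)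
       * leg23 2 (Rhat rhalf n1 n2) * leg12 (n2 + 1) (Emat q sq n1)) \<and>
    (Rhat rhalf (n1 + 1) n2 =
       leg12 (n2 + 1) (Fmat q sq n1) * leg23 2 (Rhat rhalf n1 n2)
       * leg13 2 (n1 + 1) (n2 + 1) (Rhat rhalf 1 n2) * leg12 (n2 + 1) (Emat q sq n1)) \<and>
    (Rhat rhalf n1 (n2 + 1) =
       leg23 (n1 + 1) (Fmat q sq n2) * leg12 (n2 + 1) (Rhat rhalf n1 1)
       * leg13 (n1 + 1) 2 (n2 + 1) (Rhat rhalf n1 n2) * leg23 (n1 + 1) (Emat q sq n2)) \<and>
    (Rhat rhalf n1 (n2 + 1) =
       leg23 (n1 + 1) (Fmat q sq n2) * leg13 (n1 + 1) 2 (n2 + 1) (Rhat rhalf n1 n2)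
       * leg12 (n2 + 1) (Rhat rhalf n1 1) * leg23 (n1 + 1) (Emat q sq n2))"
proof -
  have rh: "rhalf \<noteq> 0" using rhalf q_nz by auto
  note A = partA[OF q_nz q_not_root rh sq n1, of n2]
  note B = partB[OF q_nz q_not_root rh sq n2, of n1]
  define N where "N = (2*n1+2)*(n2+1)"
  define M where "M = (n1+1)*(2*n2+2)"
  have cF: "leg12 (n2+1) (Fmat q sq n1) \<in> carrier_mat ((n1+2)*(n2+1)) N"
    using leg12_carrier[of "n2+1" "Fmat q sq n1"] unfolding N_def by (simp only: Fmat_dims)
  have eN1: "2*(n1+1)*(n2+1) = N" by (simp add: N_def algebra_simps)
  have eN2: "2*((n1+1)*(n2+1)) = N" by (simp add: N_def algebra_simps)
  have c13: "leg13 2 (n1 + 1) (n2 + 1) (Rhat rhalf 1 n2) \<in> carrier_mat N N"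
    using leg13_carrier[of 2 "n1+1" "n2+1" "Rhat rhalf 1 n2"] unfolding eN1 .
  have c23: "leg23 2 (Rhat rhalf n1 n2) \<in> carrier_mat N N"
    using leg23_carrier[of 2 "Rhat rhalf n1 n2"] unfolding Rhat_dims eN2 .
  have cF': "leg23 (n1+1) (Fmat q sq n2) \<in> carrier_mat ((n1+1)*(n2+2)) M"
    using leg23_carrier[of "n1+1" "Fmat q sq n2"] unfolding M_def by (simp only: Fmat_dims)
  have eM1: "(n1+1)*2*(n2+1) = M" by (simp add: M_def algebra_simps)
  have eM2: "(n1+1)*(1+1)*(n2+1) = M" by (simp add: M_def algebra_simps)
  have c13': "leg13 (n1 + 1) 2 (n2 + 1) (Rhat rhalf n1 n2) \<in> carrier_mat M M"
    using leg13_carrier[of "n1+1" 2 "n2+1" "Rhat rhalf n1 n2"] unfolding eM1 .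
  have c12': "leg12 (n2 + 1) (Rhat rhalf n1 1) \<in> carrier_mat M M"
    using leg12_carrier[of "n2+1" "Rhat rhalf n1 1"] unfolding Rhat_dims eM2 .
  show ?thesis
    using A B
    unfolding assoc_mult_mat[OF cF c13 c23] assoc_mult_mat[OF cF c23 c13]
      assoc_mult_mat[OF cF' c13' c12'] assoc_mult_mat[OF cF' c12' c13']
    by (simp only: N_def M_def)
qed

end
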